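(* Let $\mathfrak g=\mathfrak k+_\rho V$ be the semidirect sum of a finite-dimensional real Lie algebra $\mathfrak k$ and a commutative ideal $V$, where $\rho:\mathfrak k\to\operatorname{End}(V)$ is a representation. Let $f$ be a polynomial on $\mathfrak g^*=\mathfrak k^*\oplus V^*$ such that $$f(M,v)=f(M+L,v)\quad\text{for all } (M,v)\in\mathfrak g^* \text{ and all } L\in\mathrm{St}_{\rho^*}(v)^\perp\subset\mathfrak k^*.$$ Then $f\in\operatorname{Ann}(V)$.
   Context: Elements of $\mathfrak g^*$ are written as pairs $(M,v)$ with $M\in\mathfrak k^*$, $v\in V^*$. $\rho^*:\mathfrak k\to\operatorname{End}(V^* )$ is the dual representation, and $\mathrm{St}_{\rho^*}(v)=\{X\in\mathfrak k\mid\rho^*(X)v=0\}$; $\mathrm{St}_{\rho^*}(v)^\perp=\{L\in\mathfrak k^*\mid\langle L,X\rangle=0\ \forall X\in\mathrm{St}_{\rho^*}(v)\}$. $S(\mathfrak g)$ is the polynomial algebra on $\mathfrak g^*$ with Lie–Poisson bracket $\{f,g\}(x)=\langle x,[df(x),dg(x)]\rangle$, and $\operatorname{Ann}(V)=\{f\in S(\mathfrak g)\mid\{f,\eta\}=0\ \forall\eta\in V\}$. *)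

theory Defs
  imports "HOL-Analysis.Analysis"
begin

text \<open>Model: the Lie algebra k is real^'k, the module V is real^'v (finite-dimensional, with
  fixed bases). Dual spaces k^* and V^* are identified with real^'k and real^'v via the standard
  inner product, so g^* = k^* + V^* is (real^'k) \<times> (real^'v).\<close>

definition lie_algebra :: "('a::real_vector \<Rightarrow> 'a \<Rightarrow> 'a) \<Rightarrow> bool" where
  "lie_algebra br \<longleftrightarrow> bilinear br \<and> (\<forall>x. br x x = 0) \<and>
     (\<forall>x y z. br x (br y z) + br y (br z x) + br z (br x y) = 0)"

definition lie_representation ::
  "('a::real_vector \<Rightarrow> 'a \<Rightarrow> 'a) \<Rightarrow> ('a \<Rightarrow> 'b::real_vector \<Rightarrow> 'b) \<Rightarrow> bool" where
  "lie_representation br \<rho> \<longleftrightarrow> (\<forall>w. linear (\<lambda>X. \<rho> X w)) \<and> (\<forall>X. linear (\<rho> X)) \<and>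
     (\<forall>X Y w. \<rho> (br X Y) w = \<rho> X (\<rho> Y w) - \<rho> Y (\<rho> X w))"

text \<open>Dual lie_representation: <rho^*(X) v, w> = - <v, rho(X) w>.\<close>
definition dual_rep :: "(real^'k \<Rightarrow> real^'v \<Rightarrow> real^'v) \<Rightarrow> real^'k \<Rightarrow> real^'v \<Rightarrow> real^'v" where
  "dual_rep \<rho> X v = (\<chi> j. - (v \<bullet> \<rho> X (axis j 1)))"

definition stab :: "(real^'k \<Rightarrow> real^'v \<Rightarrow> real^'v) \<Rightarrow> real^'v \<Rightarrow> (real^'k) set" where
  "stab \<rho> v = {X. dual_rep \<rho> X v = 0}"

definition perp :: "(real^'k) set \<Rightarrow> (real^'k) set" where
  "perp S = {L. \<forall>X\<in>S. L \<bullet> X = 0}"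

inductive poly_fun :: "((real^'k) \<times> (real^'v) \<Rightarrow> real) \<Rightarrow> bool" where
  const: "poly_fun (\<lambda>_. c)"
| coord_k: "poly_fun (\<lambda>x. fst x $ i)"
| coord_v: "poly_fun (\<lambda>x. snd x $ j)"
| add: "poly_fun f \<Longrightarrow> poly_fun g \<Longrightarrow> poly_fun (\<lambda>x. f x + g x)"
| mult: "poly_fun f \<Longrightarrow> poly_fun g \<Longrightarrow> poly_fun (\<lambda>x. f x * g x)"

definition sd_bracket ::
  "(real^'k \<Rightarrow> real^'k \<Rightarrow> real^'k) \<Rightarrow> (real^'k \<Rightarrow> real^'v \<Rightarrow> real^'v) \<Rightarrow>
   (real^'k) \<times> (real^'v) \<Rightarrow> (real^'k) \<times> (real^'v) \<Rightarrow> (real^'k) \<times> (real^'v)" where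
  "sd_bracket br \<rho> p q = (br (fst p) (fst q), \<rho> (fst p) (snd q) - \<rho> (fst q) (snd p))"

definition gpair :: "(real^'k) \<times> (real^'v) \<Rightarrow> (real^'k) \<times> (real^'v) \<Rightarrow> real" where
  "gpair x \<xi> = fst x \<bullet> fst \<xi> + snd x \<bullet> snd \<xi>"

text \<open>Differential df(x) in g = (g^*)^*.\<close>
definition gdiff :: "((real^'k) \<times> (real^'v) \<Rightarrow> real) \<Rightarrow> (real^'k) \<times> (real^'v) \<Rightarrow> (real^'k) \<times> (real^'v)" where
  "gdiff f x = (THE d. (f has_derivative (\<lambda>y. gpair y d)) (at x))"

definition lie_poisson ::
  "(real^'k \<Rightarrow> real^'k \<Rightarrow> real^'k) \<Rightarrow> (real^'k \<Rightarrow> real^'v \<Rightarrow> real^'v) \<Rightarrow>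
   ((real^'k) \<times> (real^'v) \<Rightarrow> real) \<Rightarrow> ((real^'k) \<times> (real^'v) \<Rightarrow> real) \<Rightarrow> (real^'k) \<times> (real^'v) \<Rightarrow> real" where
  "lie_poisson br \<rho> f g x = gpair x (sd_bracket br \<rho> (gdiff f x) (gdiff g x))"

text \<open>An element eta of V, viewed as a linear function on g^*.\<close>
definition lin_fun :: "(real^'k) \<times> (real^'v) \<Rightarrow> (real^'k) \<times> (real^'v) \<Rightarrow> real" where
  "lin_fun \<xi> = (\<lambda>x. gpair x \<xi>)"

definition Ann ::
  "(real^'k \<Rightarrow> real^'k \<Rightarrow> real^'k) \<Rightarrow> (real^'k \<Rightarrow> real^'v \<Rightarrow> real^'v) \<Rightarrow>
   ((real^'k) \<times> (real^'v) \<Rightarrow> real) set" where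
  "Ann br \<rho> = {f. poly_fun f \<and> (\<forall>\<eta>::real^'v. \<forall>x. lie_poisson br \<rho> f (lin_fun (0, \<eta>)) x = 0)}"

end

theory Submission
  imports Defs
begin

lemma gpair_lin: "gpair (a + b) d = gpair a d + gpair b d" "gpair (c *\<^sub>R a) d = c * gpair a d"
  by (auto simp: gpair_def inner_add_left algebra_simps)

lemma gpair_lin2: "gpair y (d1 + d2) = gpair y d1 + gpair y d2" "gpair y (c *\<^sub>R d) = c * gpair y d"
  by (auto simp: gpair_def inner_add_right algebra_simps)

lemma linear_gpair: "linear (\<lambda>y. gpair y d)"
  by (rule linearI) (auto simp: gpair_lin)

lemma gpair_unique:
  assumes "\<And>y. gpair y d = gpair y d'" shows "d = d'"
proof -
  have "gpair (d - d') (d - d') = 0"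
    using assms[of "d - d'"] by (simp add: gpair_def inner_diff_right)
  hence "fst (d - d') \<bullet> fst (d - d') + snd (d - d') \<bullet> snd (d - d') = 0" by (simp add: gpair_def)
  hence "fst (d - d') = 0" "snd (d - d') = 0"
    by (smt (verit) inner_ge_zero inner_eq_zero_iff)+
  thus ?thesis by (simp add: prod_eq_iff)
qed

lemma gdiff_eq:
  assumes "(f has_derivative (\<lambda>y. gpair y d)) (at x)"
  shows "gdiff f x = d"
  unfolding gdiff_def
proof (rule the_equality)
  show "(f has_derivative (\<lambda>y. gpair y d)) (at x)" by fact
  fix d' assume "(f has_derivative (\<lambda>y. gpair y d')) (at x)"
  from has_derivative_unique[OF assms this] have "(\<lambda>y. gpair y d) = (\<lambda>y. gpair y d')" .
  thus "d' = d" by (intro gpair_unique[symmetric]) meson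
qed

lemma poly_fun_deriv:
  "poly_fun f \<Longrightarrow> \<exists>d. (f has_derivative (\<lambda>y. gpair y d)) (at x)"
proof (induction rule: poly_fun.induct)
  case (const c)
  show ?case by (rule exI[of _ 0]) (simp add: gpair_def)
next
  case (coord_k i)
  have eqi: "(\<lambda>x. fst x $ i) = (\<lambda>y. gpair y (axis i 1, 0))"
    by (auto simp: fun_eq_iff gpair_def inner_axis)
  have "((\<lambda>x. fst x $ i) has_derivative (\<lambda>y. gpair y (axis i 1, 0))) (at x)"
    apply (subst eqi)
    by (rule linear_imp_has_derivative[OF linear_gpair])
  thus ?case by blast
next
  case (coord_v j)
  have eqj: "(\<lambda>x. snd x $ j) = (\<lambda>y. gpair y (0, axis j 1))"
    by (auto simp: fun_eq_iff gpair_def inner_axis)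
  have "((\<lambda>x. snd x $ j) has_derivative (\<lambda>y. gpair y (0, axis j 1))) (at x)"
    apply (subst eqj)
    by (rule linear_imp_has_derivative[OF linear_gpair])
  thus ?case by blast
next
  case (add f g)
  then obtain d1 d2 where "(f has_derivative (\<lambda>y. gpair y d1)) (at x)"
    "(g has_derivative (\<lambda>y. gpair y d2)) (at x)" by blast
  from has_derivative_add[OF this] show ?case
    by (intro exI[of _ "d1 + d2"]) (simp add: gpair_lin2)
next
  case (mult f g)
  then obtain d1 d2 where "(f has_derivative (\<lambda>y. gpair y d1)) (at x)"
    "(g has_derivative (\<lambda>y. gpair y d2)) (at x)" by blast
  note m = has_derivative_mult[OF this]
  have e: "(\<lambda>h. f x * gpair h d2 + gpair h d1 * g x) = (\<lambda>y. gpair y (f x *\<^sub>R d2 + g x *\<^sub>R d1))"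
    by (simp add: fun_eq_iff gpair_lin2 mult.commute)
  from m show ?case unfolding e by blast
qed

lemma perp_eq: "perp S = orthogonal_comp S"
  by (auto simp: perp_def orthogonal_comp_def orthogonal_def inner_commute)

theorem lemma11:
  fixes br :: "real^'k \<Rightarrow> real^'k \<Rightarrow> real^'k"
    and \<rho> :: "real^'k \<Rightarrow> real^'v \<Rightarrow> real^'v"
    and f :: "(real^'k) \<times> (real^'v) \<Rightarrow> real"
  assumes "lie_algebra br"
    and "lie_representation br \<rho>"
    and "poly_fun f"
    and "\<forall>M v. \<forall>L\<in>perp (stab \<rho> v). f (M, v) = f (M + L, v)"
  shows "f \<in> Ann br \<rho>"
proof -
  have linX: "\<And>w. linear (\<lambda>X. \<rho> X w)" and linw: "\<And>X. linear (\<rho> X)"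
    using assms(2) by (auto simp: lie_representation_def)
  have bil: "bilinear br" using assms(1) by (simp add: lie_algebra_def)
  have sub: "subspace (stab \<rho> v)" for v
  proof -
    have r0: "\<rho> 0 w = 0" and ra: "\<rho> (a + b) w = \<rho> a w + \<rho> b w"
      and rs: "\<rho> (c *\<^sub>R a) w = c *\<^sub>R \<rho> a w" for a b c w
      using linear_0[OF linX] linear_add[OF linX] linear_scale[OF linX] by auto
    show ?thesis unfolding subspace_def stab_def dual_rep_def by (simp add: vec_eq_iff inner_add_right r0 ra rs)
  qed
  have "lie_poisson br \<rho> f (lin_fun (0, \<eta>)) x = 0" for \<eta> x
  proof -
    obtain M v where x: "x = (M, v)" by fastforce
    obtain d where d: "(f has_derivative (\<lambda>y. gpair y d)) (at x)"
      using poly_fun_deriv[OF assms(3)] by blast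
    have gf: "gdiff f x = d" using gdiff_eq[OF d] .
    have "(lin_fun (0, \<eta>) has_derivative (\<lambda>y. gpair y (0, \<eta>))) (at x)"
      unfolding lin_fun_def using linear_gpair by (rule linear_imp_has_derivative)
    hence gl: "gdiff (lin_fun (0, \<eta>)) x = (0, \<eta>)" by (rule gdiff_eq)
    define A where "A = fst d"
    have orth: "L \<bullet> A = 0" if L: "L \<in> perp (stab \<rho> v)" for L
    proof -
      have Lt: "t *\<^sub>R L \<in> perp (stab \<rho> v)" for t
        using L by (auto simp: perp_def)
      have h: "((\<lambda>t::real. (M + t *\<^sub>R L, v)) has_derivative (\<lambda>t. (t *\<^sub>R L, 0))) (at 0)"
        by (intro derivative_eq_intros) auto
      have "((f \<circ> (\<lambda>t::real. (M + t *\<^sub>R L, v))) has_derivative ((\<lambda>y. gpair y d) \<circ> (\<lambda>t. (t *\<^sub>R L, 0)))) (at 0)"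
        by (rule diff_chain_at[OF h]) (use d x in simp)
      moreover have "(f \<circ> (\<lambda>t::real. (M + t *\<^sub>R L, v))) = (\<lambda>t. f (M, v))"
      proof
        fix t :: real
        have "f (M + t *\<^sub>R L, v) = f (M, v)" using assms(4) Lt[of t] by metis
        thus "(f \<circ> (\<lambda>t::real. (M + t *\<^sub>R L, v))) t = f (M, v)" by (simp only: comp_apply)
      qed
      ultimately have "((\<lambda>t::real. f (M, v)) has_derivative ((\<lambda>y. gpair y d) \<circ> (\<lambda>t. (t *\<^sub>R L, 0)))) (at 0)"
        by simp
      from has_derivative_unique[OF this has_derivative_const]
      have "gpair (L, 0) d = 0" by (drule_tac fun_cong[of _ _ 1]) simp
      thus ?thesis by (simp add: gpair_def A_def)
    qed
    have "A \<in> perp (perp (stab \<rho> v))"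
      using orth by (auto simp: perp_def inner_commute)
    hence As: "A \<in> stab \<rho> v"
      using orthogonal_comp_self[OF sub] by (simp add: perp_eq)
    hence j: "v \<bullet> \<rho> A (axis j 1) = 0" for j
      by (auto simp: stab_def dual_rep_def vec_eq_iff)
    have "\<rho> A \<eta> = (\<Sum>j\<in>UNIV. (\<eta> $ j) *\<^sub>R \<rho> A (axis j 1))"
    proof -
      have "\<eta> = (\<Sum>j\<in>UNIV. (\<eta> $ j) *\<^sub>R axis j 1)"
        using basis_expansion[of \<eta>] by (simp add: scalar_mult_eq_scaleR)
      hence "\<rho> A \<eta> = \<rho> A (\<Sum>j\<in>UNIV. (\<eta> $ j) *\<^sub>R axis j 1)" by (rule arg_cong[where f="\<rho> A"])
      also have "\<dots> = (\<Sum>j\<in>UNIV. (\<eta> $ j) *\<^sub>R \<rho> A (axis j 1))"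
        by (simp add: linear_sum[OF linw] linear_scale[OF linw])
      finally show ?thesis .
    qed
    hence "v \<bullet> \<rho> A \<eta> = 0" by (simp add: inner_sum_right j)
    moreover have "br A 0 = 0" using bil by (simp add: bilinear_rzero)
    moreover have "\<rho> 0 w = 0" for w using linear_0[OF linX] .
    ultimately show ?thesis
      unfolding lie_poisson_def gf gl by (simp add: sd_bracket_def gpair_def x A_def)
  qed
  thus ?thesis using assms(3) by (simp add: Ann_def)
qed

end
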